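(* Let $f:X\to\mathcal G$ be a function and $x_0\in\operatorname{dom} f$. The following are equivalent: (a) $f(x_0)\in\operatorname{Min}f[X]$, i.e. for all $x\in X$, $f(x)\supseteq f(x_0)$ implies $f(x)=f(x_0)$; (b) for all $x\in X$ with $f(x)\ne f(x_0)$ there is $z^*\in C^-\setminus\{0\}$ with $\varphi_{f,z^*}(x_0)<\varphi_{f,z^*}(x)$; (c) for all $x\in X$ with $f(x)\ne f(x_0)$ there is $z^*\in C^-\setminus\{0\}$ with $\varphi_{f,z^*}(x)\neq-\infty$ and $\varphi_{f,z^*}(x_0)\ominus\varphi_{f,z^*}(x)<0$; (d) for all $x\in X$ with $f(x)\ne f(x_0)$ there is $z^*\in C^-\setminus\{0\}$ with $0<\varphi_{f,z^*}(x)\ominus\varphi_{f,z^*}(x_0)$; (e) for all $x\in X$ with $f(x)\neq f(x_0)$: $0\notin f(x)\ominus f(x_0)$.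
   Context: $X$ real linear space, $Z$ real locally convex Hausdorff space with dual $Z^*$, $C\subseteq Z$ closed convex cone, $0\in C$, $C^-=\{z^*:z^*(c)\le0\ \forall c\in C\}$, $C^-\setminus\{0\}\ne\emptyset$. $\mathcal G=\{A\subseteq Z:A=\operatorname{cl}\operatorname{co}(A+C)\}$; $A\ominus B=\{z\in Z:B+\{z\}\subseteq A\}$; $\operatorname{dom}f=\{x:f(x)\ne\emptyset\}$. On $\overline{\mathbb R}$: inf-addition $\dot+$ ($(-\infty)\dot+(+\infty)=+\infty$), $r\ominus s=\inf\{t\in\mathbb R:r\le s\dot+t\}$ ($\inf\emptyset=+\infty$). $\varphi_{f,z^*}(x)=\inf\{-z^*(z):z\in f(x)\}$ ($+\infty$ if $f(x)=\emptyset$). *)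

theory Defs
  imports "HOL-Analysis.Analysis" "HOL-Library.Extended_Real"
begin

definition locally_convex_tvs :: "'z::{real_vector,t2_space} itself \<Rightarrow> bool" where
  "locally_convex_tvs _ \<longleftrightarrow>
     continuous_on UNIV (\<lambda>p::'z \<times> 'z. fst p + snd p) \<and>
     continuous_on UNIV (\<lambda>p::real \<times> 'z. fst p *\<^sub>R snd p) \<and>
     (\<forall>U::'z set. open U \<and> 0 \<in> U \<longrightarrow> (\<exists>V. open V \<and> convex V \<and> 0 \<in> V \<and> V \<subseteq> U))"

definition top_dual :: "('z::{real_vector,topological_space} \<Rightarrow> real) set" where
  "top_dual = {g. linear g \<and> continuous_on UNIV g}"

definition neg_polar :: "'z::{real_vector,topological_space} set \<Rightarrow> ('z \<Rightarrow> real) set" where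
  "neg_polar C = {g \<in> top_dual. \<forall>c\<in>C. g c \<le> 0}"

definition set_plus_cone :: "'z::real_vector set \<Rightarrow> 'z set \<Rightarrow> 'z set" where
  "set_plus_cone A C = {a + c | a c. a \<in> A \<and> c \<in> C}"

definition GG :: "'z::{real_vector,topological_space} set \<Rightarrow> 'z set set" where
  "GG C = {A. A = closure (convex hull (set_plus_cone A C))}"

definition set_minus_inf :: "'z::real_vector set \<Rightarrow> 'z set \<Rightarrow> 'z set" where
  "set_minus_inf A B = {z. \<forall>b\<in>B. b + z \<in> A}"

definition dom_sv :: "('x \<Rightarrow> 'z set) \<Rightarrow> 'x set" where
  "dom_sv f = {x. f x \<noteq> {}}"

definition inf_add :: "ereal \<Rightarrow> ereal \<Rightarrow> ereal" where
  "inf_add r s = (if r = \<infinity> \<or> s = \<infinity> then \<infinity> else r + s)"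

text \<open>r \<ominus> s = inf {t \<in> \<real>. r \<le> s +. t}, with inf of empty set = +\<infinity>.\<close>
definition ereal_inf_diff :: "ereal \<Rightarrow> ereal \<Rightarrow> ereal" where
  "ereal_inf_diff r s = Inf {ereal t | t. r \<le> inf_add s (ereal t)}"

text \<open>Scalarization \<phi>_{f,z*}(x) = inf {-z*(z). z \<in> f x}, = +\<infinity> if f x empty.\<close>
definition scal :: "('x \<Rightarrow> 'z set) \<Rightarrow> ('z \<Rightarrow> real) \<Rightarrow> 'x \<Rightarrow> ereal" where
  "scal f zs x = Inf {ereal (- zs z) | z. z \<in> f x}"

end

theory Submission
  imports Defs
begin


definition sublin :: "('a::real_vector \<Rightarrow> real) \<Rightarrow> bool" where
  "sublin p \<longleftrightarrow> (\<forall>x y. p (x + y) \<le> p x + p y) \<and> (\<forall>c x. 0 < c \<longrightarrow> p (c *\<^sub>R x) = c * p x)"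

definition good_graph :: "('a::real_vector \<Rightarrow> real) \<Rightarrow> ('a \<times> real) set \<Rightarrow> bool" where
  "good_graph p G \<longleftrightarrow> (0,0) \<in> G
     \<and> (\<forall>x r y s. (x,r) \<in> G \<longrightarrow> (y,s) \<in> G \<longrightarrow> (x+y, r+s) \<in> G)
     \<and> (\<forall>a x r. (x,r) \<in> G \<longrightarrow> (a *\<^sub>R x, a * r) \<in> G)
     \<and> (\<forall>x r r'. (x,r) \<in> G \<longrightarrow> (x,r') \<in> G \<longrightarrow> r = r')
     \<and> (\<forall>x r. (x,r) \<in> G \<longrightarrow> r \<le> p x)"

lemma good_graphD:
  assumes "good_graph p G"
  shows "(0,0) \<in> G" "\<And>x r y s. (x,r) \<in> G \<Longrightarrow> (y,s) \<in> G \<Longrightarrow> (x+y, r+s) \<in> G"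
    "\<And>a x r. (x,r) \<in> G \<Longrightarrow> (a *\<^sub>R x, a * r) \<in> G"
    "\<And>x r r'. (x,r) \<in> G \<Longrightarrow> (x,r') \<in> G \<Longrightarrow> r = r'"
    "\<And>x r. (x,r) \<in> G \<Longrightarrow> r \<le> p x"
  using assms unfolding good_graph_def by blast+

lemma good_Union:
  assumes ne: "Cs \<noteq> {}" and g: "\<forall>G\<in>Cs. good_graph p G" and ch: "\<forall>G\<in>Cs. \<forall>H\<in>Cs. G \<subseteq> H \<or> H \<subseteq> G"
  shows "good_graph p (\<Union>Cs)"
proof -
  have two: "\<exists>K\<in>Cs. a \<in> K \<and> b \<in> K" if ab: "a \<in> \<Union>Cs" "b \<in> \<Union>Cs" for a b
  proof -
    obtain G H where GH: "G \<in> Cs" "H \<in> Cs" "a \<in> G" "b \<in> H" using ab by blast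
    have "G \<subseteq> H \<or> H \<subseteq> G" using ch GH(1,2) by blast
    then show ?thesis
    proof
      assume "G \<subseteq> H" then show ?thesis using GH by blast
    next
      assume "H \<subseteq> G" then show ?thesis using GH by blast
    qed
  qed
  have gK: "good_graph p K" if "K \<in> Cs" for K using g that by blast
  show ?thesis unfolding good_graph_def
  proof (intro conjI allI impI)
    obtain K where K: "K \<in> Cs" using ne by blast
    have "(0,0) \<in> K" using good_graphD(1)[OF gK[OF K]] .
    then show "(0,0) \<in> \<Union>Cs" using K by blast
  next
    fix x r y s assume "(x,r) \<in> \<Union>Cs" "(y,s) \<in> \<Union>Cs"
    then obtain K where K: "K \<in> Cs" "(x,r) \<in> K" "(y,s) \<in> K" using two by blast
    have "(x+y, r+s) \<in> K" using good_graphD(2)[OF gK[OF K(1)] K(2,3)] .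
    then show "(x+y, r+s) \<in> \<Union>Cs" using K(1) by blast
  next
    fix a x r assume "(x,r) \<in> \<Union>Cs"
    then obtain K where K: "K \<in> Cs" "(x,r) \<in> K" by blast
    have "(a *\<^sub>R x, a * r) \<in> K" using good_graphD(3)[OF gK[OF K(1)] K(2)] .
    then show "(a *\<^sub>R x, a * r) \<in> \<Union>Cs" using K(1) by blast
  next
    fix x r r' assume "(x,r) \<in> \<Union>Cs" "(x,r') \<in> \<Union>Cs"
    then obtain K where K: "K \<in> Cs" "(x,r) \<in> K" "(x,r') \<in> K" using two by blast
    show "r = r'" using good_graphD(4)[OF gK[OF K(1)] K(2,3)] .
  next
    fix x r assume "(x,r) \<in> \<Union>Cs"
    then obtain K where K: "K \<in> Cs" "(x,r) \<in> K" by blast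
    show "r \<le> p x" using good_graphD(5)[OF gK[OF K(1)] K(2)] .
  qed
qed

lemma good_extend:
  assumes p: "sublin p" and G: "good_graph p G" and v: "v \<notin> fst ` G"
  shows "\<exists>G'. good_graph p G' \<and> G \<subseteq> G' \<and> G' \<noteq> G"
proof -
  have G0: "(0,0) \<in> G" and Gadd: "\<And>x r y s. (x,r) \<in> G \<Longrightarrow> (y,s) \<in> G \<Longrightarrow> (x+y, r+s) \<in> G"
    and Gsc: "\<And>a x r. (x,r) \<in> G \<Longrightarrow> (a *\<^sub>R x, a * r) \<in> G"
    and Gfun: "\<And>x r r'. (x,r) \<in> G \<Longrightarrow> (x,r') \<in> G \<Longrightarrow> r = r'"
    and Gdom: "\<And>x r. (x,r) \<in> G \<Longrightarrow> r \<le> p x"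
    using good_graphD[OF G] by blast+
  have padd: "\<And>x y. p (x + y) \<le> p x + p y" and phom: "\<And>c x. 0 < c \<Longrightarrow> p (c *\<^sub>R x) = c * p x"
    using p unfolding sublin_def by blast+
  let ?S = "{r - p (x - v) | x r. (x,r) \<in> G}"
  have bound: "r - p (x - v) \<le> p (y + v) - s" if "(x,r)\<in>G" "(y,s)\<in>G" for x r y s
  proof -
    have "r + s \<le> p (x + y)" using Gadd[OF that] Gdom by blast
    also have "p (x + y) \<le> p (x - v) + p (y + v)" using padd[of "x - v" "y + v"] by simp
    finally show ?thesis by simp
  qed
  define c where "c = Sup ?S"
  have ne: "?S \<noteq> {}" using G0 by blast
  have bdd: "bdd_above ?S" unfolding bdd_above_def using bound[OF _ G0] by fastforce
  have c1: "r - p (x - v) \<le> c" if "(x,r)\<in>G" for x r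
    unfolding c_def by (rule cSup_upper[OF _ bdd]) (use that in blast)
  have c2: "c \<le> p (y + v) - s" if "(y,s)\<in>G" for y s
    unfolding c_def by (rule cSup_least[OF ne]) (use bound that in blast)
  define G' where "G' = {(x + t *\<^sub>R v, r + t * c) | x r t. (x,r) \<in> G}"
  have dom': "r + t * c \<le> p (x + t *\<^sub>R v)" if "(x,r) \<in> G" for x r t
  proof (cases t "0::real" rule: linorder_cases)
    case less
    define s where "s = - t"
    have s: "s > 0" using less s_def by simp
    have "r/s - p ((1/s) *\<^sub>R x - v) \<le> c" using c1[OF Gsc[OF that, of "1/s"]] by simp
    hence "r - s * c \<le> s * p ((1/s) *\<^sub>R x - v)" using s by (simp add: field_simps)
    also have "s * p ((1/s) *\<^sub>R x - v) = p (s *\<^sub>R ((1/s) *\<^sub>R x - v))" using phom[OF s] by simp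
    also have "s *\<^sub>R ((1/s) *\<^sub>R x - v) = x + t *\<^sub>R v" using s by (simp add: s_def algebra_simps)
    finally show ?thesis by (simp add: s_def)
  next
    case equal
    then show ?thesis using Gdom[OF that] by simp
  next
    case greater
    have "c \<le> p ((1/t) *\<^sub>R x + v) - r/t" using c2[OF Gsc[OF that, of "1/t"]] by simp
    hence "r + t * c \<le> t * p ((1/t) *\<^sub>R x + v)" using greater by (simp add: field_simps)
    also have "t * p ((1/t) *\<^sub>R x + v) = p (t *\<^sub>R ((1/t) *\<^sub>R x + v))" using phom[OF greater] by simp
    also have "t *\<^sub>R ((1/t) *\<^sub>R x + v) = x + t *\<^sub>R v" using greater by (simp add: algebra_simps)
    finally show ?thesis .
  qed
  have good: "good_graph p G'" unfolding good_graph_def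
  proof (intro conjI allI impI)
    show "(0,0) \<in> G'" unfolding G'_def using G0 by force
  next
    fix x r y s assume "(x,r) \<in> G'" "(y,s) \<in> G'"
    then obtain x1 r1 t1 x2 r2 t2 where a: "(x1,r1) \<in> G" "x = x1 + t1 *\<^sub>R v" "r = r1 + t1 * c"
      and b: "(x2,r2) \<in> G" "y = x2 + t2 *\<^sub>R v" "s = r2 + t2 * c" unfolding G'_def by blast
    have "(x + y, r + s) = ((x1 + x2) + (t1 + t2) *\<^sub>R v, (r1 + r2) + (t1 + t2) * c)"
      using a b by (simp add: algebra_simps)
    then show "(x+y, r+s) \<in> G'" unfolding G'_def using Gadd[OF a(1) b(1)] by blast
  next
    fix a x r assume "(x,r) \<in> G'"
    then obtain x1 r1 t1 where h: "(x1,r1) \<in> G" "x = x1 + t1 *\<^sub>R v" "r = r1 + t1 * c"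
      unfolding G'_def by blast
    have "(a *\<^sub>R x, a * r) = (a *\<^sub>R x1 + (a * t1) *\<^sub>R v, a * r1 + (a * t1) * c)"
      using h by (simp add: algebra_simps)
    then show "(a *\<^sub>R x, a * r) \<in> G'" unfolding G'_def using Gsc[OF h(1)] by blast
  next
    fix x r r' assume "(x,r) \<in> G'" "(x,r') \<in> G'"
    then obtain x1 r1 t1 x2 r2 t2 where a: "(x1,r1) \<in> G" "x = x1 + t1 *\<^sub>R v" "r = r1 + t1 * c"
      and b: "(x2,r2) \<in> G" "x = x2 + t2 *\<^sub>R v" "r' = r2 + t2 * c" unfolding G'_def by blast
    have tt: "t1 = t2"
    proof (rule ccontr)
      assume ne: "t1 \<noteq> t2"
      have m: "(x2 + (-1) *\<^sub>R x1, r2 + (-1) * r1) \<in> G" using Gadd[OF b(1) Gsc[OF a(1)]] .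
      have eq: "(t1 - t2) *\<^sub>R v = x2 + (-1) *\<^sub>R x1" using a(2) b(2) by (simp add: algebra_simps)
      have "v = (1/(t1-t2)) *\<^sub>R ((t1 - t2) *\<^sub>R v)" using ne by simp
      also have "\<dots> = (1/(t1 - t2)) *\<^sub>R (x2 + (-1) *\<^sub>R x1)" using eq by simp
      finally have "v = (1/(t1 - t2)) *\<^sub>R (x2 + (-1) *\<^sub>R x1)" .
      moreover have "((1/(t1-t2)) *\<^sub>R (x2 + (-1) *\<^sub>R x1), (1/(t1-t2)) * (r2 + (-1) * r1)) \<in> G"
        by (rule Gsc[OF m])
      ultimately have vG: "(v, (1/(t1-t2)) * (r2 + (-1) * r1)) \<in> G" by simp
      have "v \<in> fst ` G" using image_eqI[OF _ vG, of v fst] by simp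
      then show False using v by blast
    qed
    then have "x1 = x2" using a(2) b(2) by simp
    then have "r1 = r2" using Gfun a(1) b(1) by blast
    then show "r = r'" using a b tt by simp
  next
    fix x r assume "(x,r) \<in> G'"
    then obtain x1 r1 t1 where h: "(x1,r1) \<in> G" "x = x1 + t1 *\<^sub>R v" "r = r1 + t1 * c"
      unfolding G'_def by blast
    then show "r \<le> p x" using dom'[OF h(1)] by simp
  qed
  have sub: "G \<subseteq> G'"
  proof
    fix q assume "q \<in> G"
    then obtain x r where "q = (x,r)" "(x,r) \<in> G" by (cases q) auto
    then show "q \<in> G'" unfolding G'_def by force
  qed
  have "(v, c) \<in> G'" unfolding G'_def using G0 by force
  moreover have "(v, c) \<notin> G" using v by force
  ultimately show ?thesis using good sub by blast
qed

lemma hahn_banach: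
  assumes p: "sublin p" and G0: "good_graph p G0"
  shows "\<exists>g. linear g \<and> (\<forall>x. g x \<le> p x) \<and> (\<forall>x r. (x,r) \<in> G0 \<longrightarrow> g x = r)"
proof -
  let ?A = "{G. good_graph p G \<and> G0 \<subseteq> G}"
  have "\<exists>M\<in>?A. \<forall>X\<in>?A. M \<subseteq> X \<longrightarrow> X = M"
  proof (rule subset_Zorn_nonempty)
    show "?A \<noteq> {}" using G0 by blast
  next
    fix Cs assume ne: "Cs \<noteq> {}" and ch: "subset.chain ?A Cs"
    have chA: "Cs \<subseteq> ?A" and chT: "\<forall>X\<in>Cs. \<forall>Y\<in>Cs. X \<subseteq> Y \<or> Y \<subseteq> X"
      using ch unfolding subset_chain_def by auto
    have "\<forall>G\<in>Cs. good_graph p G" using chA by blast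
    then have "good_graph p (\<Union>Cs)" using good_Union[OF ne] chT by blast
    moreover obtain K where "K \<in> Cs" using ne by blast
    then have "G0 \<subseteq> K" using chA by auto
    then have "G0 \<subseteq> \<Union>Cs" using \<open>K \<in> Cs\<close> by auto
    ultimately show "\<Union>Cs \<in> ?A" by simp
  qed
  then obtain M where M0: "M \<in> ?A" and max0: "\<forall>X\<in>?A. M \<subseteq> X \<longrightarrow> X = M"
    by (rule bexE)
  have M: "good_graph p M" "G0 \<subseteq> M" using M0 by auto
  have max: "X = M" if "good_graph p X" "G0 \<subseteq> X" "M \<subseteq> X" for X
    using max0 that by auto
  have full: "x \<in> fst ` M" for x
  proof (rule ccontr)
    assume "x \<notin> fst ` M"
    from good_extend[OF p M(1) this] obtain G' where "good_graph p G'" "M \<subseteq> G'" "G' \<noteq> M" by blast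
    then show False using max M(2) by blast
  qed
  have Madd: "\<And>x r y s. (x,r) \<in> M \<Longrightarrow> (y,s) \<in> M \<Longrightarrow> (x+y, r+s) \<in> M"
    and Msc: "\<And>a x r. (x,r) \<in> M \<Longrightarrow> (a *\<^sub>R x, a * r) \<in> M"
    and Mfun: "\<And>x r r'. (x,r) \<in> M \<Longrightarrow> (x,r') \<in> M \<Longrightarrow> r = r'"
    and Mdom: "\<And>x r. (x,r) \<in> M \<Longrightarrow> r \<le> p x"
    using good_graphD[OF M(1)] by blast+
  define g where "g x = (THE r. (x,r) \<in> M)" for x
  have gM: "(x, g x) \<in> M" for x
  proof -
    obtain r where r: "(x,r) \<in> M" using full[of x] by force
    have "\<exists>!r. (x,r) \<in> M" using r Mfun by blast
    then show ?thesis unfolding g_def by (rule theI')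
  qed
  have "linear g"
  proof (rule linearI)
    fix a b show "g (a + b) = g a + g b" using Mfun[OF gM Madd[OF gM gM]] .
  next
    fix r b show "g (r *\<^sub>R b) = r *\<^sub>R g b" using Mfun[OF gM Msc[OF gM]] by simp
  qed
  moreover have "\<forall>x. g x \<le> p x" using Mdom gM by blast
  moreover have "\<forall>x r. (x,r) \<in> G0 \<longrightarrow> g x = r" using Mfun gM M(2) by blast
  ultimately show ?thesis by blast
qed



lemma tvs_cont_add:
  assumes Z: "locally_convex_tvs TYPE('z::{real_vector,t2_space})"
  shows "continuous_on UNIV (\<lambda>y::'z. y + a)"
proof -
  have add: "continuous_on UNIV (\<lambda>p::'z \<times> 'z. fst p + snd p)" using Z unfolding locally_convex_tvs_def by blast
  have "continuous_on UNIV (\<lambda>y::'z. (y, a))" by (intro continuous_on_Pair continuous_on_id continuous_on_const)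
  then have "continuous_on UNIV (\<lambda>y::'z. (\<lambda>p::'z \<times> 'z. fst p + snd p) (y, a))"
    by (rule continuous_on_compose2[OF add]) auto
  then show ?thesis by simp
qed

lemma tvs_cont_scale:
  assumes Z: "locally_convex_tvs TYPE('z::{real_vector,t2_space})"
  shows "continuous_on UNIV (\<lambda>y::'z. c *\<^sub>R y)"
proof -
  have sc: "continuous_on UNIV (\<lambda>p::real \<times> 'z. fst p *\<^sub>R snd p)" using Z unfolding locally_convex_tvs_def by blast
  have "continuous_on UNIV (\<lambda>y::'z. (c, y))" by (intro continuous_on_Pair continuous_on_id continuous_on_const)
  then have "continuous_on UNIV (\<lambda>y::'z. (\<lambda>p::real \<times> 'z. fst p *\<^sub>R snd p) (c, y))"
    by (rule continuous_on_compose2[OF sc]) auto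
  then show ?thesis by simp
qed

lemma tvs_cont_ray:
  assumes Z: "locally_convex_tvs TYPE('z::{real_vector,t2_space})"
  shows "continuous_on UNIV (\<lambda>s::real. s *\<^sub>R (z::'z))"
proof -
  have sc: "continuous_on UNIV (\<lambda>p::real \<times> 'z. fst p *\<^sub>R snd p)" using Z unfolding locally_convex_tvs_def by blast
  have "continuous_on UNIV (\<lambda>s::real. (s, z))" by (intro continuous_on_Pair continuous_on_id continuous_on_const)
  then have "continuous_on UNIV (\<lambda>s::real. (\<lambda>p::real \<times> 'z. fst p *\<^sub>R snd p) (s, z))"
    by (rule continuous_on_compose2[OF sc]) auto
  then show ?thesis by simp
qed

lemma open_vimage_UNIV: "continuous_on UNIV f \<Longrightarrow> open S \<Longrightarrow> open (f -` S)"
  using continuous_on_open_vimage[of UNIV f] by auto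

lemma tvs_cont_affine:
  assumes Z: "locally_convex_tvs TYPE('z::{real_vector,t2_space})"
  shows "continuous_on UNIV (\<lambda>y::'z. c *\<^sub>R (y + a))"
  by (rule continuous_on_compose2[OF tvs_cont_scale[OF Z] tvs_cont_add[OF Z]]) auto

lemma tvs_ray_open:
  assumes Z: "locally_convex_tvs TYPE('z::{real_vector,t2_space})" and Q: "open Q" and s0: "s0 *\<^sub>R (z::'z) \<in> Q"
  obtains e where "e > 0" "\<And>s. \<bar>s - s0\<bar> < e \<Longrightarrow> s *\<^sub>R z \<in> Q"
proof -
  have "open ((\<lambda>s::real. s *\<^sub>R z) -` Q)" by (rule open_vimage_UNIV[OF tvs_cont_ray[OF Z] Q])
  moreover have "s0 \<in> (\<lambda>s::real. s *\<^sub>R z) -` Q" using s0 by simp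
  ultimately obtain e where "e > 0" "ball s0 e \<subseteq> (\<lambda>s::real. s *\<^sub>R z) -` Q"
    using open_contains_ball by blast
  then show ?thesis using that by (auto simp: dist_real_def abs_minus_commute subset_eq)
qed

section \<open>Minkowski functional\<close>

definition mink :: "'z::real_vector set \<Rightarrow> 'z \<Rightarrow> real" where
  "mink Q z = Inf {t. 0 < t \<and> (1/t) *\<^sub>R z \<in> Q}"

lemma convex_shrink:
  assumes "convex Q" "0 \<in> Q" "z \<in> Q" "0 \<le> u" "u \<le> 1"
  shows "u *\<^sub>R z \<in> Q"
  using convexD[OF assms(1) assms(3) assms(2), of u "1 - u"] assms by simp

locale mink_setup =
  fixes Q :: "'z::{real_vector,t2_space} set"
  assumes Z: "locally_convex_tvs TYPE('z)" and O_open: "open Q" and O_convex: "convex Q" and O0: "0 \<in> Q"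
begin

definition T where "T z = {t. 0 < t \<and> (1/t) *\<^sub>R z \<in> Q}"

lemma mink_T: "mink Q z = Inf (T z)" unfolding mink_def T_def ..

lemma T_ne: "T z \<noteq> {}"
proof -
  have "0 *\<^sub>R z \<in> Q" using O0 by simp
  then obtain e where e: "e > 0" "\<And>s. \<bar>s - 0\<bar> < e \<Longrightarrow> s *\<^sub>R z \<in> Q"
    using tvs_ray_open[OF Z O_open] by metis
  have "(e/2) *\<^sub>R z \<in> Q" using e by simp
  then have "2/e \<in> T z" unfolding T_def using e by simp
  then show ?thesis by blast
qed

lemma T_bdd: "bdd_below (T z)" unfolding T_def bdd_below_def by (rule exI[of _ 0]) auto

lemma T_up: assumes "t \<in> T z" "t \<le> t'" shows "t' \<in> T z"
proof -
  have t: "0 < t" "(1/t) *\<^sub>R z \<in> Q" using assms unfolding T_def by auto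
  have "(t/t') *\<^sub>R ((1/t) *\<^sub>R z) \<in> Q"
    by (rule convex_shrink[OF O_convex O0 t(2)]) (use t assms in auto)
  moreover have "(t/t') *\<^sub>R ((1/t) *\<^sub>R z) = (1/t') *\<^sub>R z" using t by simp
  ultimately show ?thesis using t assms unfolding T_def by auto
qed

lemma mink_nonneg: "0 \<le> mink Q z"
  unfolding mink_T by (rule cInf_greatest[OF T_ne]) (auto simp: T_def)

lemma mink_lt1: assumes "z \<in> Q" shows "mink Q z < 1"
proof -
  have "1 *\<^sub>R z \<in> Q" using assms by simp
  then obtain e where e: "e > 0" "\<And>s. \<bar>s - 1\<bar> < e \<Longrightarrow> s *\<^sub>R z \<in> Q"
    using tvs_ray_open[OF Z O_open] by metis
  define s where "s = 1 + e/2"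
  have s: "s > 1" "s *\<^sub>R z \<in> Q" using e unfolding s_def by auto
  have "1/s \<in> T z" unfolding T_def using s by simp
  then have "mink Q z \<le> 1/s" unfolding mink_T by (rule cInf_lower[OF _ T_bdd])
  also have "1/s < 1" using s by simp
  finally show ?thesis .
qed

lemma mink_ge1: assumes "z \<notin> Q" shows "1 \<le> mink Q z"
  unfolding mink_T
proof (rule cInf_greatest[OF T_ne])
  fix t assume t: "t \<in> T z"
  show "1 \<le> t"
  proof (rule ccontr)
    assume "\<not> 1 \<le> t"
    have t0: "0 < t" "(1/t) *\<^sub>R z \<in> Q" using t unfolding T_def by auto
    have "t *\<^sub>R ((1/t) *\<^sub>R z) \<in> Q"
      by (rule convex_shrink[OF O_convex O0 t0(2)]) (use t0 \<open>\<not> 1 \<le> t\<close> in auto)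
    then show False using assms t0 by simp
  qed
qed

lemma mink_hom: assumes c: "0 < c" shows "mink Q (c *\<^sub>R z) = c * mink Q z"
proof (rule antisym)
  have "mink Q (c *\<^sub>R z) / c \<le> mink Q z"
    unfolding mink_T[of z]
  proof (rule cInf_greatest[OF T_ne])
    fix t assume t: "t \<in> T z"
    then have "c * t \<in> T (c *\<^sub>R z)" unfolding T_def using c by auto
    then have "mink Q (c *\<^sub>R z) \<le> c * t" unfolding mink_T by (rule cInf_lower[OF _ T_bdd])
    then show "mink Q (c *\<^sub>R z) / c \<le> t" using c by (simp add: field_simps)
  qed
  then show "mink Q (c *\<^sub>R z) \<le> c * mink Q z" using c by (simp add: field_simps)
next
  have "mink Q z \<le> mink Q (c *\<^sub>R z) / c"
  proof -
    have "mink Q z * c \<le> mink Q (c *\<^sub>R z)"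
      unfolding mink_T[of "c *\<^sub>R z"]
    proof (rule cInf_greatest[OF T_ne])
      fix t assume t: "t \<in> T (c *\<^sub>R z)"
      then have "t / c \<in> T z" unfolding T_def using c by auto
      then have "mink Q z \<le> t / c" unfolding mink_T by (rule cInf_lower[OF _ T_bdd])
      then show "mink Q z * c \<le> t" using c by (simp add: field_simps)
    qed
    then show ?thesis using c by (simp add: field_simps)
  qed
  then show "c * mink Q z \<le> mink Q (c *\<^sub>R z)" using c by (simp add: field_simps)
qed

lemma mink_add: "mink Q (x + y) \<le> mink Q x + mink Q y"
proof -
  have key: "mink Q (x + y) \<le> s + t" if s: "s \<in> T x" and t: "t \<in> T y" for s t
  proof -
    have s0: "0 < s" "(1/s) *\<^sub>R x \<in> Q" and t0: "0 < t" "(1/t) *\<^sub>R y \<in> Q" using s t unfolding T_def by auto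
    have "(s/(s+t)) *\<^sub>R ((1/s) *\<^sub>R x) + (t/(s+t)) *\<^sub>R ((1/t) *\<^sub>R y) \<in> Q"
      by (rule convexD[OF O_convex s0(2) t0(2)]) (use s0 t0 in \<open>auto simp flip: add_divide_distrib\<close>)
    moreover have "(s/(s+t)) *\<^sub>R ((1/s) *\<^sub>R x) + (t/(s+t)) *\<^sub>R ((1/t) *\<^sub>R y) = (1/(s+t)) *\<^sub>R (x + y)"
      using s0 t0 by (simp add: scaleR_right_distrib)
    ultimately have "s + t \<in> T (x + y)" unfolding T_def using s0 t0 by auto
    then show ?thesis unfolding mink_T by (rule cInf_lower[OF _ T_bdd])
  qed
  have k2: "mink Q (x + y) - t \<le> mink Q x" if t: "t \<in> T y" for t
    unfolding mink_T[of x] by (rule cInf_greatest[OF T_ne]) (use key t in force)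
  have "mink Q (x + y) - mink Q x \<le> mink Q y"
    unfolding mink_T[of y] by (rule cInf_greatest[OF T_ne]) (use k2 in force)
  then show ?thesis by simp
qed

lemma mink_sublin: "sublin (mink Q)"
  unfolding sublin_def using mink_add mink_hom by blast

end


lemma separation:
  fixes K :: "'z::{real_vector,t2_space} set"
  assumes Z: "locally_convex_tvs TYPE('z)" and K: "convex K" "K \<noteq> {}"
    and U0: "open U0" "z0 \<in> U0" "U0 \<inter> K = {}"
  shows "\<exists>g::'z \<Rightarrow> real. linear g \<and> continuous_on UNIV g \<and> (\<exists>s>0. \<forall>a\<in>K. g a + s \<le> g z0)"
proof -
  define U where "U = (\<lambda>y. y + z0) -` U0"
  have U: "open U" "0 \<in> U" unfolding U_def using open_vimage_UNIV[OF tvs_cont_add[OF Z] U0(1)] U0(2) by auto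
  obtain V where V: "open V" "convex V" "0 \<in> V" "V \<subseteq> U"
    using Z U unfolding locally_convex_tvs_def by blast
  define V1 where "V1 = V \<inter> (\<lambda>y. (-1) *\<^sub>R y) -` V"
  have V1: "open V1" unfolding V1_def using V(1) open_vimage_UNIV[OF tvs_cont_scale[OF Z] V(1)] by auto
  have lin_neg: "linear (\<lambda>y::'z. (-1) *\<^sub>R y)" by (rule linearI) (auto simp: algebra_simps)
  have V1c: "convex V1" unfolding V1_def by (rule convex_Int[OF V(2) convex_linear_vimage[OF lin_neg V(2)]])
  have V10: "0 \<in> V1" unfolding V1_def using V(3) by simp
  obtain x1 where x1: "x1 \<in> K" using K(2) by blast
  define Q where "Q = (\<Union>a\<in>K. (\<lambda>y. y + (x1 - a)) -` V1)"
  have Qmem: "y \<in> Q \<longleftrightarrow> (\<exists>a\<in>K. y + (x1 - a) \<in> V1)" for y unfolding Q_def by auto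
  have Qopen: "open Q" unfolding Q_def
    by (rule open_UN) (use open_vimage_UNIV[OF tvs_cont_add[OF Z] V1] in blast)
  have Qconvex: "convex Q"
  proof (rule convexI)
    fix y y' :: 'z and u v :: real assume yy: "y \<in> Q" "y' \<in> Q" and uv0: "0 \<le> u" "0 \<le> v" "u + v = 1"
    have uv: "0 \<le> u \<and> 0 \<le> v \<and> u + v = 1" using uv0 by simp
    from yy obtain a a' where a: "a \<in> K" "y + (x1 - a) \<in> V1" and a': "a' \<in> K" "y' + (x1 - a') \<in> V1"
      using Qmem by blast
    have "u *\<^sub>R (y + (x1 - a)) + v *\<^sub>R (y' + (x1 - a')) \<in> V1"
      using convexD[OF V1c a(2) a'(2)] uv by blast
    moreover have "u *\<^sub>R a + v *\<^sub>R a' \<in> K" using convexD[OF K(1) a(1) a'(1)] uv by blast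
    moreover have "u *\<^sub>R (y + (x1 - a)) + v *\<^sub>R (y' + (x1 - a')) = (u *\<^sub>R y + v *\<^sub>R y') + (x1 - (u *\<^sub>R a + v *\<^sub>R a'))"
    proof -
      have "u *\<^sub>R x1 + v *\<^sub>R x1 = x1" using uv by (metis scaleR_add_left scaleR_one)
      then show ?thesis by (simp add: algebra_simps)
    qed
    ultimately show "u *\<^sub>R y + v *\<^sub>R y' \<in> Q" using Qmem by metis
  qed
  have Q0: "0 \<in> Q" unfolding Qmem using x1 V10 by (intro bexI[of _ x1]) simp_all
  define y0 where "y0 = z0 - x1"
  have y0: "y0 \<notin> Q"
  proof (rule notI)
    assume "y0 \<in> Q"
    then obtain a where a: "a \<in> K" "y0 + (x1 - a) \<in> V1" using Qmem by blast
    then have "z0 - a \<in> V1" unfolding y0_def by (simp add: algebra_simps)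
    then have "(-1) *\<^sub>R (z0 - a) \<in> V" unfolding V1_def by simp
    then have "(-1) *\<^sub>R (z0 - a) \<in> U" using V(4) by blast
    then have "a \<in> U0" unfolding U_def by (simp add: algebra_simps)
    then show False using a(1) U0(3) by blast
  qed
  interpret M: mink_setup Q using Z Qopen Qconvex Q0 by unfold_locales
  define p where "p = mink Q"
  have psub: "sublin p" unfolding p_def by (rule M.mink_sublin)
  have py0: "1 \<le> p y0" unfolding p_def by (rule M.mink_ge1[OF y0])
  have y0ne: "y0 \<noteq> 0" using y0 Q0 by blast
  define G0 where "G0 = {(t *\<^sub>R y0, t) | t. True}"
  have G0good: "good_graph p G0" unfolding good_graph_def G0_def
  proof (intro conjI allI impI)
    show "(0, 0) \<in> {(t *\<^sub>R y0, t) |t. True}" by (rule CollectI, rule exI[of _ 0]) simp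
  next
    fix x r y s assume "(x, r) \<in> {(t *\<^sub>R y0, t) |t. True}" "(y, s) \<in> {(t *\<^sub>R y0, t) |t. True}"
    then show "(x + y, r + s) \<in> {(t *\<^sub>R y0, t) |t. True}" by (auto simp: scaleR_add_left)
  next
    fix a x r assume "(x, r) \<in> {(t *\<^sub>R y0, t) |t. True}"
    then show "(a *\<^sub>R x, a * r) \<in> {(t *\<^sub>R y0, t) |t. True}" by auto
  next
    fix x r r' assume "(x, r) \<in> {(t *\<^sub>R y0, t) |t. True}" "(x, r') \<in> {(t *\<^sub>R y0, t) |t. True}"
    then show "r = r'" using y0ne by auto
  next
    fix x r assume "(x, r) \<in> {(t *\<^sub>R y0, t) |t. True}"
    then have x: "x = r *\<^sub>R y0" by auto
    show "r \<le> p x"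
    proof (cases "r > 0")
      case True
      have "p x = r * p y0" unfolding x p_def by (rule M.mink_hom[OF True])
      then show ?thesis using py0 True by (simp add: mult_le_cancel_left1)
    next
      case False
      then show ?thesis using M.mink_nonneg[of x] unfolding p_def by simp
    qed
  qed
  obtain g where g: "linear g" "\<And>x. g x \<le> p x" "\<And>x r. (x,r) \<in> G0 \<Longrightarrow> g x = r"
    using hahn_banach[OF psub G0good] by blast
  have gy0: "g y0 = 1" using g(3)[of "1 *\<^sub>R y0" 1] unfolding G0_def by auto
  have gneg: "g ((-1) *\<^sub>R y) = - g y" for y using linear_scale[OF g(1), of "-1" y] by simp
  have gadd: "g (x + y) = g x + g y" for x y using linear_add[OF g(1)] by simp
  have gscale: "g (c *\<^sub>R y) = c * g y" for c y using linear_scale[OF g(1)] by simp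
  have glt: "g y < 1" if "y \<in> Q" for y using g(2)[of y] M.mink_lt1[OF that] unfolding p_def by simp
  define N where "N = Q \<inter> (\<lambda>y. (-1) *\<^sub>R y) -` Q"
  have N: "open N" "0 \<in> N" unfolding N_def using Qopen open_vimage_UNIV[OF tvs_cont_scale[OF Z] Qopen] Q0 by auto
  have Nb: "\<bar>g y\<bar> < 1" if "y \<in> N" for y
  proof -
    have "g y < 1" "g ((-1) *\<^sub>R y) < 1" using glt that unfolding N_def by auto
    then show ?thesis using gneg[of y] by simp
  qed
  have gcont: "continuous_on UNIV g"
    unfolding continuous_on_topological
  proof (intro ballI allI impI)
    fix x :: 'z and B :: "real set" assume B: "open B" "g x \<in> B"
    then obtain e where e: "e > 0" "ball (g x) e \<subseteq> B" using open_contains_ball by blast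
    define A where "A = (\<lambda>y. (1/e) *\<^sub>R (y + (- x))) -` N"
    have "open A" unfolding A_def by (rule open_vimage_UNIV[OF tvs_cont_affine[OF Z] N(1)])
    moreover have "x \<in> A" unfolding A_def using N(2) by simp
    moreover have "g y \<in> B" if "y \<in> A" for y
    proof -
      have "\<bar>g ((1/e) *\<^sub>R (y + (- x)))\<bar> < 1" using Nb that unfolding A_def by simp
      then have "\<bar>(1/e) * (g y - g x)\<bar> < 1" using gscale gadd gneg[of x] linear_diff[OF g(1)] by simp
      then have "\<bar>g y - g x\<bar> < e" using e(1) by (simp add: abs_mult field_simps)
      then have "g y \<in> ball (g x) e" by (simp add: dist_real_def abs_minus_commute)
      then show ?thesis using e(2) by blast
    qed
    ultimately show "\<exists>A. open A \<and> x \<in> A \<and> (\<forall>y\<in>UNIV. y \<in> A \<longrightarrow> g y \<in> B)" by blast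
  qed
  have "0 *\<^sub>R y0 \<in> V1" using V10 by simp
  then obtain d where d: "d > 0" "\<And>s. \<bar>s - 0\<bar> < d \<Longrightarrow> s *\<^sub>R y0 \<in> V1"
    using tvs_ray_open[OF Z V1] by metis
  define s where "s = d / 2"
  have s: "s > 0" "s *\<^sub>R y0 \<in> V1" using d unfolding s_def by auto
  have gap: "g a + s \<le> g z0" if a: "a \<in> K" for a
  proof -
    have "(a + s *\<^sub>R y0 - x1) + (x1 - a) = s *\<^sub>R y0" by (simp add: algebra_simps)
    then have "a + s *\<^sub>R y0 - x1 \<in> Q" using Qmem a s(2) by metis
    then have "g (a + s *\<^sub>R y0 - x1) < 1" by (rule glt)
    moreover have "g (a + s *\<^sub>R y0 - x1) = g a + s - g x1"
      using gadd gscale gy0 linear_diff[OF g(1)] by simp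
    moreover have "g z0 - g x1 = 1" using gy0 linear_diff[OF g(1)] unfolding y0_def by simp
    ultimately show ?thesis by simp
  qed
  have "\<forall>a\<in>K. g a + s \<le> g z0" using gap by blast
  then have "linear g \<and> continuous_on UNIV g \<and> (\<exists>s>0. \<forall>a\<in>K. g a + s \<le> g z0)"
    using g(1) gcont s(1) by blast
  then show ?thesis
    by (rule exI[where x=g])
qed



lemma eid_all: assumes "\<And>t. P t" shows "Inf {ereal t |t. P t} = -\<infinity>"
proof (rule ereal_bot)
  fix B show "Inf {ereal t |t. P t} \<le> ereal B" by (rule Inf_lower) (use assms in blast)
qed

lemma eid_none: assumes "\<And>t. \<not> P t" shows "Inf {ereal t |t. P t} = \<infinity>"
proof -
  have "{ereal t |t. P t} = {}" using assms by blast
  then show ?thesis by (simp add: top_ereal_def)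
qed

lemma eid_ge: "Inf {ereal t |t. c \<le> t} = ereal c"
proof (rule antisym)
  show "Inf {ereal t |t. c \<le> t} \<le> ereal c" by (rule Inf_lower) blast
  show "ereal c \<le> Inf {ereal t |t. c \<le> t}" by (rule Inf_greatest) auto
qed

lemma eid_rr: "ereal_inf_diff (ereal b) (ereal a) = ereal (b - a)"
proof -
  have "{ereal t |t. ereal b \<le> inf_add (ereal a) (ereal t)} = {ereal t |t. b - a \<le> t}"
    unfolding inf_add_def by auto
  then show ?thesis unfolding ereal_inf_diff_def using eid_ge by simp
qed

lemma eid_Pr: "ereal_inf_diff \<infinity> (ereal a) = \<infinity>"
  unfolding ereal_inf_diff_def inf_add_def by (rule eid_none) simp

lemma eid_M: "ereal_inf_diff (-\<infinity>) s = -\<infinity>"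
  unfolding ereal_inf_diff_def by (rule eid_all) simp

lemma eid_P: "ereal_inf_diff r \<infinity> = -\<infinity>"
  unfolding ereal_inf_diff_def inf_add_def by (rule eid_all) simp

lemma eid_rM: "ereal_inf_diff (ereal b) (-\<infinity>) = \<infinity>"
  unfolding ereal_inf_diff_def inf_add_def by (rule eid_none) simp

lemma eid_PM: "ereal_inf_diff \<infinity> (-\<infinity>) = \<infinity>"
  unfolding ereal_inf_diff_def inf_add_def by (rule eid_none) simp

lemma L1: assumes "s \<noteq> \<infinity>" shows "0 < ereal_inf_diff r s \<longleftrightarrow> s < r"
  using assms by (cases r; cases s) (simp_all add: eid_rr eid_Pr eid_M eid_P eid_rM eid_PM)

lemma L2: assumes "s \<noteq> \<infinity>" shows "(r \<noteq> -\<infinity> \<and> ereal_inf_diff s r < 0) \<longleftrightarrow> s < r"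
  using assms by (cases r; cases s) (simp_all add: eid_rr eid_Pr eid_M eid_P eid_rM eid_PM)



theorem mainTheorem19:
  fixes C :: "'z::{real_vector,t2_space} set"
    and f :: "'x::real_vector \<Rightarrow> 'z set"
    and x0 :: 'x
  assumes Z: "locally_convex_tvs TYPE('z)"
    and C_closed: "closed C" and C_convex: "convex C" and C_cone: "cone C" and C_zero: "0 \<in> C"
    and polar_ne: "neg_polar C - {(\<lambda>_. 0)} \<noteq> {}"
    and f_G: "\<forall>x. f x \<in> GG C"
    and x0_dom: "x0 \<in> dom_sv f"
  shows
   "let a = (\<forall>x. f x0 \<subseteq> f x \<longrightarrow> f x = f x0);
        b = (\<forall>x. f x \<noteq> f x0 \<longrightarrow> (\<exists>zs \<in> neg_polar C - {(\<lambda>_. 0)}.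
                  scal f zs x0 < scal f zs x));
        c = (\<forall>x. f x \<noteq> f x0 \<longrightarrow> (\<exists>zs \<in> neg_polar C - {(\<lambda>_. 0)}.
                  scal f zs x \<noteq> -\<infinity> \<and> ereal_inf_diff (scal f zs x0) (scal f zs x) < 0));
        d = (\<forall>x. f x \<noteq> f x0 \<longrightarrow> (\<exists>zs \<in> neg_polar C - {(\<lambda>_. 0)}.
                  0 < ereal_inf_diff (scal f zs x) (scal f zs x0)));
        e = (\<forall>x. f x \<noteq> f x0 \<longrightarrow> 0 \<notin> set_minus_inf (f x) (f x0))
    in (a \<longleftrightarrow> b) \<and> (a \<longleftrightarrow> c) \<and> (a \<longleftrightarrow> d) \<and> (a \<longleftrightarrow> e)"
proof -
  have fx0: "f x0 \<noteq> {}" using x0_dom unfolding dom_sv_def by simp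
  have scal_fin: "scal f zs x0 \<noteq> \<infinity>" for zs
  proof -
    obtain z where z: "z \<in> f x0" using fx0 by blast
    have "scal f zs x0 \<le> ereal (- zs z)" unfolding scal_def by (rule Inf_lower) (use z in blast)
    then show ?thesis by auto
  qed
  have mono: "scal f zs x \<le> scal f zs x0" if "f x0 \<subseteq> f x" for zs x
    unfolding scal_def by (rule Inf_superset_mono) (use that in blast)
  have AE: "(\<forall>x. f x0 \<subseteq> f x \<longrightarrow> f x = f x0) \<longleftrightarrow> (\<forall>x. f x \<noteq> f x0 \<longrightarrow> 0 \<notin> set_minus_inf (f x) (f x0))"
    unfolding set_minus_inf_def by auto
  have L2': "(scal f zs x \<noteq> -\<infinity> \<and> ereal_inf_diff (scal f zs x0) (scal f zs x) < 0) \<longleftrightarrow> scal f zs x0 < scal f zs x" for zs x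
    using L2[OF scal_fin] .
  have L1': "(0 < ereal_inf_diff (scal f zs x) (scal f zs x0)) \<longleftrightarrow> scal f zs x0 < scal f zs x" for zs x
    using L1[OF scal_fin] .
  have AB: "(\<forall>x. f x0 \<subseteq> f x \<longrightarrow> f x = f x0) \<longleftrightarrow> (\<forall>x. f x \<noteq> f x0 \<longrightarrow> (\<exists>zs \<in> neg_polar C - {(\<lambda>_. 0)}.
                  scal f zs x0 < scal f zs x))"
  proof
    assume a: "\<forall>x. f x0 \<subseteq> f x \<longrightarrow> f x = f x0"
    show "\<forall>x. f x \<noteq> f x0 \<longrightarrow> (\<exists>zs \<in> neg_polar C - {(\<lambda>_. 0)}. scal f zs x0 < scal f zs x)"
    proof (intro allI impI)
      fix x assume ne: "f x \<noteq> f x0"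
      then have "\<not> f x0 \<subseteq> f x" using a by blast
      then obtain z0 where z0: "z0 \<in> f x0" "z0 \<notin> f x" by blast
      show "\<exists>zs \<in> neg_polar C - {(\<lambda>_. 0)}. scal f zs x0 < scal f zs x"
      proof (cases "f x = {}")
        case True
        obtain zs where zs: "zs \<in> neg_polar C - {(\<lambda>_. 0)}" using polar_ne by blast
        have "scal f zs x = \<infinity>" unfolding scal_def True by (simp add: top_ereal_def)
        then have "scal f zs x0 < scal f zs x" using scal_fin[of zs] by (cases "scal f zs x0") auto
        then show ?thesis using zs by blast
      next
        case False
        define H where "H = convex hull (set_plus_cone (f x) C)"
        have fxH: "f x = closure H" using f_G unfolding GG_def H_def by auto
        have Hc: "convex H" unfolding H_def by (rule convex_convex_hull)
        have subH: "set_plus_cone (f x) C \<subseteq> H" unfolding H_def by (rule hull_subset)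
        have plusH: "a + c \<in> H" if "a \<in> f x" "c \<in> C" for a c
          using subH that unfolding set_plus_cone_def by blast
        have fxsub: "f x \<subseteq> H" using plusH[OF _ C_zero] by auto
        have Hne: "H \<noteq> {}" using False fxsub by blast
        have o1: "open (- closure H)" by (intro open_Compl closed_closure)
        have o2: "z0 \<in> - closure H" using z0(2) fxH by simp
        have o3: "(- closure H) \<inter> H = {}" using closure_subset[of H] by blast
        obtain g :: "'z \<Rightarrow> real" where g: "linear g" "continuous_on UNIV g" and
          gs: "\<exists>s>0. \<forall>a\<in>H. g a + s \<le> g z0"
          using separation[OF Z Hc Hne o1 o2 o3] by blast
        obtain s where s: "s > 0" "\<And>a. a \<in> H \<Longrightarrow> g a + s \<le> g z0" using gs by blast
        obtain a0 where a0: "a0 \<in> f x" using False by blast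
        have gC: "g c \<le> 0" if c: "c \<in> C" for c
        proof (rule ccontr)
          assume "\<not> g c \<le> 0"
          then have gc: "g c > 0" by simp
          define t where "t = (g z0 - g a0) / g c"
          have "g a0 + s \<le> g z0" using s(2) fxsub a0 by blast
          then have t0: "t \<ge> 0" unfolding t_def using gc s(1) by simp
          have "t *\<^sub>R c \<in> C" using C_cone c t0 unfolding cone_def by blast
          then have "g (a0 + t *\<^sub>R c) + s \<le> g z0" using s(2) plusH[OF a0] by blast
          moreover have "g (a0 + t *\<^sub>R c) = g a0 + t * g c"
            using linear_add[OF g(1)] linear_scale[OF g(1)] by simp
          moreover have "t * g c = g z0 - g a0" unfolding t_def using gc by simp
          ultimately show False using s(1) by simp
        qed
        have gpol: "g \<in> neg_polar C" unfolding neg_polar_def top_dual_def using g gC by blast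
        have gnz: "g \<noteq> (\<lambda>_. 0)"
        proof
          assume "g = (\<lambda>_. 0)"
          then show False using s fxsub a0 by force
        qed
        have l1: "scal f g x0 \<le> ereal (- g z0)" unfolding scal_def by (rule Inf_lower) (use z0 in blast)
        have l2: "ereal (- g z0 + s) \<le> scal f g x" unfolding scal_def
        proof (rule Inf_greatest)
          fix y assume "y \<in> {ereal (- g z) |z. z \<in> f x}"
          then obtain z where "y = ereal (- g z)" "z \<in> f x" by blast
          then show "ereal (- g z0 + s) \<le> y" using s(2) fxsub by force
        qed
        have "ereal (- g z0) < ereal (- g z0 + s)" using s(1) by simp
        then have "scal f g x0 < scal f g x" using l1 l2 by (meson le_less_trans less_le_trans)
        then show ?thesis using gpol gnz by blast
      qed
    qed
  next
    assume b: "\<forall>x. f x \<noteq> f x0 \<longrightarrow> (\<exists>zs \<in> neg_polar C - {(\<lambda>_. 0)}. scal f zs x0 < scal f zs x)"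
    show "\<forall>x. f x0 \<subseteq> f x \<longrightarrow> f x = f x0"
    proof (intro allI impI)
      fix x assume sub: "f x0 \<subseteq> f x"
      show "f x = f x0"
      proof (rule ccontr)
        assume "f x \<noteq> f x0"
        then obtain zs where "scal f zs x0 < scal f zs x" using b by blast
        then show False using mono[OF sub, of zs] by simp
      qed
    qed
  qed
  show ?thesis unfolding Let_def L2' L1' using AB AE by blast
qed


end
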